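(* Let $G_1=(V_1,E_1)$ and $G_2=(V_2,E_2)$ be connected graphs whose path metrics are conditionally strictly negative definite, and let $o\in V_2$. Then the path metric of the comb product $G_1\triangleright_o G_2$ is conditionally strictly negative definite.
   Context: The comb product $G_1\triangleright_o G_2$ is the graph obtained from $G_1$ by attaching to each vertex $v\in V_1$ its own copy of $G_2$, identifying the vertex $o$ of that copy with $v$ (copies attached at different vertices are disjoint otherwise). The path metric of a connected graph is the shortest-path distance on its vertex set. A symmetric real function $K$ on $V\times V$ is conditionally strictly negative definite if for every finitely supported $\lambda\colon V\to\mathbb{C}$, $\lambda\neq0$, with $\sum_v\lambda(v)=0$ one has $\sum_{x,y}\lambda(x)\overline{\lambda(y)}K(x,y)<0$. *)

theory Defs
  imports Complex_Main "HOL-Library.Complex_Order"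
begin

definition graph :: "'a set \<Rightarrow> ('a \<Rightarrow> 'a \<Rightarrow> bool) \<Rightarrow> bool" where
  "graph V E \<longleftrightarrow> (\<forall>x y. E x y \<longrightarrow> x \<in> V \<and> y \<in> V) \<and>
                  (\<forall>x y. E x y \<longrightarrow> E y x) \<and> (\<forall>x. \<not> E x x)"

definition is_walk :: "('a \<Rightarrow> 'a \<Rightarrow> bool) \<Rightarrow> 'a \<Rightarrow> 'a \<Rightarrow> 'a list \<Rightarrow> bool" where
  "is_walk E x y xs \<longleftrightarrow> xs \<noteq> [] \<and> hd xs = x \<and> last xs = y \<and> successively E xs"

definition connected_graph :: "'a set \<Rightarrow> ('a \<Rightarrow> 'a \<Rightarrow> bool) \<Rightarrow> bool" where
  "connected_graph V E \<longleftrightarrow> graph V E \<and> (\<forall>x\<in>V. \<forall>y\<in>V. \<exists>xs. is_walk E x y xs)"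

definition path_dist :: "('a \<Rightarrow> 'a \<Rightarrow> bool) \<Rightarrow> 'a \<Rightarrow> 'a \<Rightarrow> nat" where
  "path_dist E x y = (LEAST n. \<exists>xs. is_walk E x y xs \<and> length xs = Suc n)"

definition cond_strict_neg_def :: "'a set \<Rightarrow> ('a \<Rightarrow> 'a \<Rightarrow> real) \<Rightarrow> bool" where
  "cond_strict_neg_def V K \<longleftrightarrow>
     (\<forall>lam :: 'a \<Rightarrow> complex.
        finite {v. lam v \<noteq> 0} \<and> {v. lam v \<noteq> 0} \<subseteq> V \<and> (\<exists>v. lam v \<noteq> 0) \<and>
        (\<Sum>v\<in>{v. lam v \<noteq> 0}. lam v) = 0 \<longrightarrow>
        (\<Sum>x\<in>{v. lam v \<noteq> 0}. \<Sum>y\<in>{v. lam v \<noteq> 0}. lam x * cnj (lam y) * complex_of_real (K x y)) < 0)"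

text \<open>Comb product G1 \<triangleright>_r G2: vertex (v, x) is vertex x of the copy of G2
attached at v \<in> V1; the vertex (v, r) is identified with v itself.\<close>
definition comb_vertices :: "'a set \<Rightarrow> 'b set \<Rightarrow> ('a \<times> 'b) set" where
  "comb_vertices V1 V2 = V1 \<times> V2"

definition comb_edges :: "('a \<Rightarrow> 'a \<Rightarrow> bool) \<Rightarrow> ('b \<Rightarrow> 'b \<Rightarrow> bool) \<Rightarrow> 'b \<Rightarrow>
                         ('a \<times> 'b) \<Rightarrow> ('a \<times> 'b) \<Rightarrow> bool" where
  "comb_edges E1 E2 r p q \<longleftrightarrow>
     (snd p = r \<and> snd q = r \<and> E1 (fst p) (fst q)) \<or> (fst p = fst q \<and> E2 (snd p) (snd q))"

end

theory Submission
  imports Defs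
begin


lemma walk_single: "is_walk E x x [x]" by (simp add: is_walk_def)

lemma walk_append:
  assumes "is_walk E x y xs" "is_walk E y z ys"
  shows "is_walk E x z (xs @ tl ys)" "length (xs @ tl ys) = length xs + length ys - 1"
proof -
  obtain y' ys' where ys: "ys = y' # ys'" using assms(2) unfolding is_walk_def by (meson list.exhaust)
  have y': "y' = y" using assms(2) ys by (simp add: is_walk_def)
  show "is_walk E x z (xs @ tl ys)"
  proof (cases "ys' = []")
    case True
    then show ?thesis using assms ys y' unfolding is_walk_def by simp
  next
    case False
    have s: "successively E (y # ys')" "last (y # ys') = z" using assms(2) ys y' unfolding is_walk_def by auto
    then have "E y (hd ys')" "successively E ys'" using False successively_Cons by metis+
    moreover have "last ys' = z" using s False by simp
    ultimately show ?thesis using assms(1) False ys unfolding is_walk_def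
      by (simp add: successively_append_iff)
  qed
  show "length (xs @ tl ys) = length xs + length ys - 1" using ys by simp
qed

lemma walk_cons: "E a b \<Longrightarrow> is_walk E b c ys \<Longrightarrow> is_walk E a c (a # ys)"
  unfolding is_walk_def by (simp add: successively_Cons)

lemma walk_map:
  assumes "is_walk E x y xs" "\<And>a b. E a b \<Longrightarrow> F (f a) (f b)"
  shows "is_walk F (f x) (f y) (map f xs)"
proof -
  have "successively E xs" "xs \<noteq> []" "hd xs = x" "last xs = y" using assms(1) by (auto simp: is_walk_def)
  moreover have "successively (\<lambda>a b. F (f a) (f b)) xs"
    by (rule successively_mono[OF \<open>successively E xs\<close>]) (rule assms(2))
  ultimately show ?thesis unfolding is_walk_def by (simp add: successively_map hd_map last_map)
qed

lemma pd_le: "is_walk E x y xs \<Longrightarrow> path_dist E x y + 1 \<le> length xs"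
proof -
  assume w: "is_walk E x y xs"
  then have "xs \<noteq> []" by (simp add: is_walk_def)
  then have "length xs = Suc (length xs - 1)" by simp
  then have "path_dist E x y \<le> length xs - 1" unfolding path_dist_def
    using w by (intro Least_le) blast
  then show ?thesis using \<open>xs \<noteq> []\<close> by (cases xs) auto
qed

lemma pd_walk:
  assumes "connected_graph V E" "x \<in> V" "y \<in> V"
  shows "\<exists>xs. is_walk E x y xs \<and> length xs = Suc (path_dist E x y)"
proof -
  obtain xs where w: "is_walk E x y xs" using assms unfolding connected_graph_def by blast
  then have "xs \<noteq> []" by (simp add: is_walk_def)
  then have "\<exists>n xs. is_walk E x y xs \<and> length xs = Suc n" using w
    by (intro exI[of _ "length xs - 1"]) auto
  then show ?thesis unfolding path_dist_def by (rule LeastI_ex)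
qed

lemma pd_refl: "path_dist E x x = 0"
  using pd_le[OF walk_single[of E x]] by simp

lemma pd_tri:
  assumes "connected_graph V E" "x \<in> V" "y \<in> V" "z \<in> V"
  shows "path_dist E x z \<le> path_dist E x y + path_dist E y z"
proof -
  obtain xs where a: "is_walk E x y xs" "length xs = Suc (path_dist E x y)" using pd_walk[OF assms(1,2,3)] by blast
  obtain ys where b: "is_walk E y z ys" "length ys = Suc (path_dist E y z)" using pd_walk[OF assms(1,3,4)] by blast
  show ?thesis using pd_le[OF walk_append(1)[OF a(1) b(1)]] walk_append(2)[OF a(1) b(1)] a b by simp
qed

lemma pd_edge:
  assumes "connected_graph V E" "E a b" "c \<in> V"
  shows "path_dist E a c \<le> 1 + path_dist E b c"
proof -
  have "b \<in> V" using assms(1,2) unfolding connected_graph_def graph_def by blast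
  obtain ys where b: "is_walk E b c ys" "length ys = Suc (path_dist E b c)" using pd_walk[OF assms(1) \<open>b \<in> V\<close> assms(3)] by blast
  show ?thesis using pd_le[OF walk_cons[OF assms(2) b(1)]] b by simp
qed

lemma pd_edge1:
  assumes "connected_graph V E" "E a b"
  shows "path_dist E a b \<le> 1"
proof -
  have "b \<in> V" using assms(1,2) unfolding connected_graph_def graph_def by blast
  then show ?thesis using pd_edge[OF assms \<open>b \<in> V\<close>] pd_refl[of E b] by simp
qed



definition cd :: "('a\<Rightarrow>'a\<Rightarrow>bool) \<Rightarrow> ('b\<Rightarrow>'b\<Rightarrow>bool) \<Rightarrow> 'b \<Rightarrow> 'a\<times>'b \<Rightarrow> 'a\<times>'b \<Rightarrow> nat" where
"cd E1 E2 r p q = (if fst p = fst q then path_dist E2 (snd p) (snd q)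
   else path_dist E2 (snd p) r + path_dist E1 (fst p) (fst q) + path_dist E2 r (snd q))"

lemma comb_edge_V:
  assumes "connected_graph V1 E1" "connected_graph V2 E2" "r \<in> V2"
    "p \<in> V1 \<times> V2" "comb_edges E1 E2 r p p'"
  shows "p' \<in> V1 \<times> V2"
  using assms unfolding comb_edges_def connected_graph_def graph_def
  by (cases p; cases p') auto

lemma lip:
  assumes G1: "connected_graph V1 E1" and G2: "connected_graph V2 E2" and r: "r \<in> V2"
    and p: "p \<in> V1 \<times> V2" and p': "p' \<in> V1 \<times> V2" and q: "q \<in> V1 \<times> V2"
    and e: "comb_edges E1 E2 r p p'"
  shows "cd E1 E2 r p q \<le> 1 + cd E1 E2 r p' q"
proof -
  obtain u x where pp: "p = (u,x)" by (cases p)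
  obtain u' x' where pp': "p' = (u',x')" by (cases p')
  obtain v y where qq: "q = (v,y)" by (cases q)
  have uV: "u \<in> V1" "u' \<in> V1" "v \<in> V1" and xV: "x \<in> V2" "x' \<in> V2" "y \<in> V2"
    using p p' q pp pp' qq by auto
  note irr = G1[unfolded connected_graph_def graph_def]
  from e consider (a) "x = r" "x' = r" "E1 u u'" | (b) "u = u'" "E2 x x'"
    unfolding comb_edges_def pp pp' by auto
  then show ?thesis
  proof cases
    case a
    have uu: "u \<noteq> u'" using a(3) irr by blast
    have d1: "path_dist E1 u u' \<le> 1" by (rule pd_edge1[OF G1 a(3)])
    have d2: "path_dist E1 u v \<le> 1 + path_dist E1 u' v" by (rule pd_edge[OF G1 a(3) uV(3)])
    show ?thesis
      using uu d1 d2 a(1,2) unfolding cd_def pp pp' qq by (auto simp: pd_refl)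
  next
    case b
    have d1: "path_dist E2 x y \<le> 1 + path_dist E2 x' y" by (rule pd_edge[OF G2 b(2) xV(3)])
    have d2: "path_dist E2 x r \<le> 1 + path_dist E2 x' r" by (rule pd_edge[OF G2 b(2) r])
    show ?thesis
      using d1 d2 b(1) unfolding cd_def pp pp' qq by auto
  qed
qed

lemma lower:
  assumes G1: "connected_graph V1 E1" and G2: "connected_graph V2 E2" and r: "r \<in> V2"
    and q: "q \<in> V1 \<times> V2"
  shows "is_walk (comb_edges E1 E2 r) p q ws \<Longrightarrow> p \<in> V1 \<times> V2 \<Longrightarrow> cd E1 E2 r p q + 1 \<le> length ws"
proof (induction ws arbitrary: p)
  case Nil
  then show ?case by (simp add: is_walk_def)
next
  case (Cons a ws)
  have pa: "a = p" using Cons.prems by (simp add: is_walk_def)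
  show ?case
  proof (cases "ws = []")
    case True
    then have "p = q" using Cons.prems by (auto simp: is_walk_def)
    then show ?thesis by (simp add: cd_def pd_refl)
  next
    case False
    have s: "successively (comb_edges E1 E2 r) (a # ws)" using Cons.prems by (auto simp: is_walk_def)
    then have e: "comb_edges E1 E2 r p (hd ws)" and s2: "successively (comb_edges E1 E2 r) ws"
      using False pa successively_Cons by metis+
    have w2: "is_walk (comb_edges E1 E2 r) (hd ws) q ws"
      using Cons.prems False s2 by (simp add: is_walk_def)
    have hV: "hd ws \<in> V1 \<times> V2" by (rule comb_edge_V[OF G1 G2 r Cons.prems(2) e])
    have "cd E1 E2 r (hd ws) q + 1 \<le> length ws" by (rule Cons.IH[OF w2 hV])
    moreover have "cd E1 E2 r p q \<le> 1 + cd E1 E2 r (hd ws) q"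
      by (rule lip[OF G1 G2 r Cons.prems(2) hV q e])
    ultimately show ?thesis by simp
  qed
qed

lemma upper:
  assumes G1: "connected_graph V1 E1" and G2: "connected_graph V2 E2" and r: "r \<in> V2"
    and p: "p \<in> V1 \<times> V2" and q: "q \<in> V1 \<times> V2"
  shows "\<exists>ws. is_walk (comb_edges E1 E2 r) p q ws \<and> length ws = Suc (cd E1 E2 r p q)"
proof -
  obtain u x where pp: "p = (u,x)" by (cases p)
  obtain v y where qq: "q = (v,y)" by (cases q)
  have uV: "u \<in> V1" "v \<in> V1" and xV: "x \<in> V2" "y \<in> V2"
    using p q pp qq by auto
  have lift: "\<And>w a b. E2 a b \<Longrightarrow> comb_edges E1 E2 r (w, a) (w, b)" by (simp add: comb_edges_def)
  have liftr: "\<And>a b. E1 a b \<Longrightarrow> comb_edges E1 E2 r (a, r) (b, r)" by (simp add: comb_edges_def)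
  show ?thesis
  proof (cases "u = v")
    case True
    obtain xs where xs: "is_walk E2 x y xs" "length xs = Suc (path_dist E2 x y)"
      using pd_walk[OF G2 xV] by blast
    have "is_walk (comb_edges E1 E2 r) (Pair u x) (Pair u y) (map (Pair u) xs)"
      by (rule walk_map[OF xs(1)]) (rule lift)
    then show ?thesis using xs True unfolding pp qq cd_def by (intro exI[of _ "map (Pair u) xs"]) simp
  next
    case False
    obtain xs where xs: "is_walk E2 x r xs" "length xs = Suc (path_dist E2 x r)"
      using pd_walk[OF G2 xV(1) r] by blast
    obtain ws where ws: "is_walk E1 u v ws" "length ws = Suc (path_dist E1 u v)"
      using pd_walk[OF G1 uV] by blast
    obtain ys where ys: "is_walk E2 r y ys" "length ys = Suc (path_dist E2 r y)"
      using pd_walk[OF G2 r xV(2)] by blast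
    have w1: "is_walk (comb_edges E1 E2 r) (Pair u x) (Pair u r) (map (Pair u) xs)"
      by (rule walk_map[OF xs(1)]) (rule lift)
    have w2: "is_walk (comb_edges E1 E2 r) ((\<lambda>w. (w, r)) u) ((\<lambda>w. (w, r)) v) (map (\<lambda>w. (w, r)) ws)"
      by (rule walk_map[OF ws(1)]) (rule liftr)
    have w3: "is_walk (comb_edges E1 E2 r) (Pair v r) (Pair v y) (map (Pair v) ys)"
      by (rule walk_map[OF ys(1)]) (rule lift)
    have w12: "is_walk (comb_edges E1 E2 r) (u, x) (v, r) (map (Pair u) xs @ tl (map (\<lambda>w. (w, r)) ws))"
      "length (map (Pair u) xs @ tl (map (\<lambda>w. (w, r)) ws)) = length xs + length ws - 1"
      using walk_append[OF w1 w2[simplified]] by simp_all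
    have w123: "is_walk (comb_edges E1 E2 r) (u, x) (v, y) ((map (Pair u) xs @ tl (map (\<lambda>w. (w, r)) ws)) @ tl (map (Pair v) ys))"
      "length ((map (Pair u) xs @ tl (map (\<lambda>w. (w, r)) ws)) @ tl (map (Pair v) ys)) = length xs + length ws - 1 + length ys - 1"
      using walk_append[OF w12(1) w3] w12(2) by simp_all
    show ?thesis using w123 False xs(2) ws(2) ys(2) unfolding pp qq cd_def
      by (intro exI[of _ "(map (Pair u) xs @ tl (map (\<lambda>w. (w, r)) ws)) @ tl (map (Pair v) ys)"]) simp
  qed
qed

lemma comb_dist:
  assumes G1: "connected_graph V1 E1" and G2: "connected_graph V2 E2" and r: "r \<in> V2"
    and p: "p \<in> V1 \<times> V2" and q: "q \<in> V1 \<times> V2"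
  shows "path_dist (comb_edges E1 E2 r) p q = cd E1 E2 r p q"
  unfolding path_dist_def
proof (rule Least_equality)
  show "\<exists>xs. is_walk (comb_edges E1 E2 r) p q xs \<and> length xs = Suc (cd E1 E2 r p q)"
    by (rule upper[OF assms])
next
  fix n assume "\<exists>xs. is_walk (comb_edges E1 E2 r) p q xs \<and> length xs = Suc n"
  then obtain xs where "is_walk (comb_edges E1 E2 r) p q xs" "length xs = Suc n" by blast
  then show "cd E1 E2 r p q \<le> n" using lower[OF G1 G2 r q, of p xs] p by simp
qed



lemma expand1:
  fixes f g A C :: "'x \<Rightarrow> complex"
  assumes "finite X"
  shows "(\<Sum>x\<in>X. \<Sum>y\<in>X. f x * g y * (A x + B + C y)) =
    (\<Sum>x\<in>X. f x * A x) * (\<Sum>y\<in>X. g y) + B * (\<Sum>x\<in>X. f x) * (\<Sum>y\<in>X. g y) + (\<Sum>x\<in>X. f x) * (\<Sum>y\<in>X. g y * C y)"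
proof -
  have 1: "(\<Sum>x\<in>X. f x * A x) * (\<Sum>y\<in>X. g y) = (\<Sum>x\<in>X. \<Sum>y\<in>X. f x * g y * A x)"
    by (simp only: sum_product) (simp add: algebra_simps)
  have 2: "B * (\<Sum>x\<in>X. f x) * (\<Sum>y\<in>X. g y) = (\<Sum>x\<in>X. \<Sum>y\<in>X. f x * g y * B)"
    by (simp add: sum_product sum_distrib_left algebra_simps)
  have 3: "(\<Sum>x\<in>X. f x) * (\<Sum>y\<in>X. g y * C y) = (\<Sum>x\<in>X. \<Sum>y\<in>X. f x * g y * C y)"
    by (simp add: sum_product algebra_simps)
  show ?thesis unfolding 1 2 3 by (simp add: sum.distrib[symmetric] distrib_left)
qed

lemma sum_delta_mult:
  fixes g :: "'x \<Rightarrow> complex"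
  assumes "finite X" "r \<in> X"
  shows "(\<Sum>y\<in>X. (if y = r then c else 0) * g y) = c * g r"
proof -
  have "(\<Sum>y\<in>X. (if y = r then c else 0) * g y) = (\<Sum>y\<in>X. if y = r then c * g y else 0)"
    by (rule sum.cong) auto
  also have "\<dots> = c * g r" using assms by (simp add: sum.delta)
  finally show ?thesis .
qed

lemma expand2:
  fixes f :: "'x \<Rightarrow> complex" and D :: "'x \<Rightarrow> 'x \<Rightarrow> complex"
  assumes X: "finite X" "r \<in> X" and Drr: "D r r = 0"
  shows "(\<Sum>x\<in>X. \<Sum>y\<in>X. (f x - (if x = r then m else 0)) * cnj (f y - (if y = r then m else 0)) * D x y)
    = (\<Sum>x\<in>X. \<Sum>y\<in>X. f x * cnj (f y) * D x y) - cnj m * (\<Sum>x\<in>X. f x * D x r) - m * (\<Sum>y\<in>X. cnj (f y) * D r y)"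
proof -
  define dl where "dl x = (if x = r then (1::complex) else 0)" for x
  have e: "\<And>x y. (f x - (if x = r then m else 0)) * cnj (f y - (if y = r then m else 0)) * D x y
     = f x * cnj (f y) * D x y - cnj m * (dl y * (f x * D x y)) - m * (dl x * (cnj (f y) * D x y))
       + m * cnj m * (dl x * (dl y * D x y))"
    by (simp add: dl_def algebra_simps)
  have d: "\<And>h. (\<Sum>y\<in>X. dl y * h y) = h r"
    using sum_delta_mult[OF X, of 1] by (simp add: dl_def)
  show ?thesis
    apply (simp only: e sum.distrib sum_subtractf sum_distrib_left[symmetric] d)
    apply (simp add: Drr sum_distrib_left)
    done
qed



lemma csnd_on:
  assumes c: "cond_strict_neg_def V K" and fA: "finite A" and AV: "A \<subseteq> V"
    and out: "\<And>v. v \<notin> A \<Longrightarrow> g v = 0" and s: "(\<Sum>v\<in>A. g v) = 0"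
  shows "(\<Sum>x\<in>A. \<Sum>y\<in>A. g x * cnj (g y) * complex_of_real (K x y)) \<le> 0"
    and "(\<exists>v. g v \<noteq> 0) \<Longrightarrow> (\<Sum>x\<in>A. \<Sum>y\<in>A. g x * cnj (g y) * complex_of_real (K x y)) < 0"
proof -
  define S where "S = {v. g v \<noteq> 0}"
  have SA: "S \<subseteq> A" using out S_def by blast
  have fS: "finite S" using SA fA finite_subset by blast
  have sS: "(\<Sum>v\<in>S. g v) = 0"
    using s sum.mono_neutral_right[OF fA SA, of g] by (simp add: S_def)
  have inner: "\<And>x. (\<Sum>y\<in>A. g x * cnj (g y) * complex_of_real (K x y)) = (\<Sum>y\<in>S. g x * cnj (g y) * complex_of_real (K x y))"
    by (rule sum.mono_neutral_right[OF fA SA]) (auto simp: S_def)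
  have eq: "(\<Sum>x\<in>A. \<Sum>y\<in>A. g x * cnj (g y) * complex_of_real (K x y)) = (\<Sum>x\<in>S. \<Sum>y\<in>S. g x * cnj (g y) * complex_of_real (K x y))"
    unfolding inner by (rule sum.mono_neutral_right[OF fA SA]) (auto simp: S_def)
  show strict: "(\<exists>v. g v \<noteq> 0) \<Longrightarrow> (\<Sum>x\<in>A. \<Sum>y\<in>A. g x * cnj (g y) * complex_of_real (K x y)) < 0"
    using c unfolding cond_strict_neg_def_def eq S_def
    using fS SA AV sS unfolding S_def by blast
  show "(\<Sum>x\<in>A. \<Sum>y\<in>A. g x * cnj (g y) * complex_of_real (K x y)) \<le> 0"
  proof (cases "\<exists>v. g v \<noteq> 0")
    case True then show ?thesis using strict by (simp add: less_imp_le)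
  next
    case False then show ?thesis by simp
  qed
qed

theorem mainTheorem8:
  fixes V1 :: "'a set" and E1 :: "'a \<Rightarrow> 'a \<Rightarrow> bool"
    and V2 :: "'b set" and E2 :: "'b \<Rightarrow> 'b \<Rightarrow> bool" and r :: 'b
  assumes "connected_graph V1 E1" and "connected_graph V2 E2"
    and "cond_strict_neg_def V1 (\<lambda>x y. real (path_dist E1 x y))"
    and "cond_strict_neg_def V2 (\<lambda>x y. real (path_dist E2 x y))"
    and "r \<in> V2"
  shows "cond_strict_neg_def (comb_vertices V1 V2)
           (\<lambda>p q. real (path_dist (comb_edges E1 E2 r) p q))"
proof -
  note G1 = assms(1) and G2 = assms(2) and c1 = assms(3) and c2 = assms(4) and r = assms(5)
  show ?thesis unfolding cond_strict_neg_def_def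
  proof (intro allI impI)
    fix lam :: "'a \<times> 'b \<Rightarrow> complex"
    assume h: "finite {v. lam v \<noteq> 0} \<and> {v. lam v \<noteq> 0} \<subseteq> comb_vertices V1 V2 \<and> (\<exists>v. lam v \<noteq> 0) \<and>
        (\<Sum>v\<in>{v. lam v \<noteq> 0}. lam v) = 0"
    define S where "S = {v. lam v \<noteq> 0}"
    have fS: "finite S" and SV: "S \<subseteq> V1 \<times> V2" and nz: "\<exists>v. lam v \<noteq> 0" and s0: "sum lam S = 0"
      using h by (auto simp: S_def comb_vertices_def)
    define U where "U = fst ` S"
    define X where "X = insert r (snd ` S)"
    have fU: "finite U" and fX: "finite X" using fS by (auto simp: U_def X_def)
    have UV: "U \<subseteq> V1" and XV: "X \<subseteq> V2" using SV r by (auto simp: U_def X_def)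
    have rX: "r \<in> X" by (simp add: X_def)
    have SUX: "S \<subseteq> U \<times> X" by (force simp: U_def X_def)
    have lam0: "\<And>p. p \<notin> S \<Longrightarrow> lam p = 0" by (simp add: S_def)
    have fUX: "finite (U \<times> X)" using fU fX by simp
    define D1 where "D1 u v = complex_of_real (real (path_dist E1 u v))" for u v
    define D2 where "D2 x y = complex_of_real (real (path_dist E2 x y))" for x y
    define K where "K p q = complex_of_real (real (path_dist (comb_edges E1 E2 r) p q))" for p q
    define mu where "mu u = (\<Sum>x\<in>X. lam (u,x))" for u
    define mu' where "mu' u = (\<Sum>x\<in>X. cnj (lam (u,x)))" for u
    define a where "a u = (\<Sum>x\<in>X. lam (u,x) * D2 x r)" for u
    define b where "b u = (\<Sum>x\<in>X. cnj (lam (u,x)) * D2 r x)" for u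
    define l where "l u x = lam (u,x) - (if x = r then mu u else 0)" for u x
    define Q2 where "Q2 u = (\<Sum>x\<in>X. \<Sum>y\<in>X. l u x * cnj (l u y) * complex_of_real (real (path_dist E2 x y)))" for u
    define Q1 where "Q1 = (\<Sum>u\<in>U. \<Sum>v\<in>U. mu u * cnj (mu v) * complex_of_real (real (path_dist E1 u v)))"
    define M where "M u v = (\<Sum>x\<in>X. \<Sum>y\<in>X. lam (u,x) * cnj (lam (v,y)) * K (u,x) (v,y))" for u v
    have mu'_eq: "\<And>u. mu' u = cnj (mu u)" by (simp add: mu'_def mu_def)
    have Kf: "K (u,x) (v,y) = (if u = v then D2 x y else D2 x r + D1 u v + D2 r y)"
      if "u \<in> U" "v \<in> U" "x \<in> X" "y \<in> X" for u v x y
    proof -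
      have "(u,x) \<in> V1 \<times> V2" "(v,y) \<in> V1 \<times> V2" using that UV XV by auto
      then have "path_dist (comb_edges E1 E2 r) (u,x) (v,y) = cd E1 E2 r (u,x) (v,y)"
        by (intro comb_dist[OF G1 G2 r])
      then show ?thesis unfolding K_def D1_def D2_def cd_def by simp
    qed
    have step1: "(\<Sum>x\<in>S. \<Sum>y\<in>S. lam x * cnj (lam y) * K x y) = (\<Sum>p\<in>U\<times>X. \<Sum>q\<in>U\<times>X. lam p * cnj (lam q) * K p q)"
    proof -
      have inner: "\<And>p. (\<Sum>q\<in>U\<times>X. lam p * cnj (lam q) * K p q) = (\<Sum>q\<in>S. lam p * cnj (lam q) * K p q)"
        by (rule sum.mono_neutral_right[OF fUX SUX]) (auto simp: lam0)
      show ?thesis unfolding inner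
        by (rule sum.mono_neutral_right[OF fUX SUX, symmetric]) (auto simp: lam0)
    qed
    have cp: "\<And>h. (\<Sum>p\<in>U\<times>X. h p) = (\<Sum>u\<in>U. \<Sum>x\<in>X. h (u,x))"
      by (simp add: sum.cartesian_product)
    have step2: "(\<Sum>p\<in>U\<times>X. \<Sum>q\<in>U\<times>X. lam p * cnj (lam q) * K p q) = (\<Sum>u\<in>U. \<Sum>v\<in>U. M u v)"
    proof -
      have "(\<Sum>p\<in>U\<times>X. \<Sum>q\<in>U\<times>X. lam p * cnj (lam q) * K p q)
          = (\<Sum>u\<in>U. \<Sum>x\<in>X. \<Sum>v\<in>U. \<Sum>y\<in>X. lam (u,x) * cnj (lam (v,y)) * K (u,x) (v,y))"
        by (simp only: cp)
      also have "\<dots> = (\<Sum>u\<in>U. \<Sum>v\<in>U. M u v)"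
        unfolding M_def by (rule sum.cong[OF refl], rule sum.swap)
      finally show ?thesis .
    qed
    have Mform: "M u v = a u * mu' v + D1 u v * mu u * mu' v + mu u * b v + (if u = v then Q2 u else 0)"
      if uv: "u \<in> U" "v \<in> U" for u v
    proof (cases "u = v")
      case True
      have "M u v = (\<Sum>x\<in>X. \<Sum>y\<in>X. lam (u,x) * cnj (lam (u,y)) * D2 x y)"
        unfolding M_def True using Kf uv True by (intro sum.cong refl) auto
      moreover have "Q2 u = (\<Sum>x\<in>X. \<Sum>y\<in>X. lam (u,x) * cnj (lam (u,y)) * D2 x y)
          - cnj (mu u) * a u - mu u * b u"
        unfolding Q2_def l_def a_def b_def D2_def
        by (rule expand2[OF fX rX]) (simp add: pd_refl)
      moreover have "D1 u u = 0" by (simp add: D1_def pd_refl)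
      ultimately show ?thesis using True by (simp add: mu'_eq algebra_simps)
    next
      case False
      have "M u v = (\<Sum>x\<in>X. \<Sum>y\<in>X. lam (u,x) * cnj (lam (v,y)) * (D2 x r + D1 u v + D2 r y))"
        unfolding M_def using Kf uv False by (intro sum.cong refl) auto
      also have "\<dots> = a u * mu' v + D1 u v * mu u * mu' v + mu u * b v"
        unfolding a_def mu_def mu'_def b_def
        by (subst expand1[OF fX]) (simp add: algebra_simps)
      finally show ?thesis using False by simp
    qed
    have smu: "(\<Sum>u\<in>U. mu u) = 0"
    proof -
      have "(\<Sum>u\<in>U. mu u) = (\<Sum>p\<in>U\<times>X. lam p)" unfolding mu_def by (simp only: cp)
      also have "\<dots> = sum lam S" by (rule sum.mono_neutral_right[OF fUX SUX]) (auto simp: lam0)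
      finally show ?thesis using s0 by simp
    qed
    have smu': "(\<Sum>u\<in>U. mu' u) = 0" using smu by (simp add: mu'_eq flip: cnj_sum)
    have step3: "(\<Sum>u\<in>U. \<Sum>v\<in>U. M u v) = Q1 + (\<Sum>u\<in>U. Q2 u)"
    proof -
      have "(\<Sum>u\<in>U. \<Sum>v\<in>U. M u v) = (\<Sum>u\<in>U. \<Sum>v\<in>U. a u * mu' v + D1 u v * mu u * mu' v + mu u * b v + (if u = v then Q2 u else 0))"
        using Mform by (intro sum.cong refl) auto
      also have "\<dots> = (\<Sum>u\<in>U. a u) * (\<Sum>v\<in>U. mu' v) + (\<Sum>u\<in>U. \<Sum>v\<in>U. D1 u v * mu u * mu' v)
          + (\<Sum>u\<in>U. mu u) * (\<Sum>v\<in>U. b v) + (\<Sum>u\<in>U. Q2 u)"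
        using fU by (simp add: sum.distrib sum_product)
      also have "\<dots> = Q1 + (\<Sum>u\<in>U. Q2 u)"
        using smu smu' unfolding Q1_def D1_def mu'_eq by (simp add: algebra_simps)
      finally show ?thesis .
    qed
    have Q: "(\<Sum>x\<in>S. \<Sum>y\<in>S. lam x * cnj (lam y) * K x y) = Q1 + (\<Sum>u\<in>U. Q2 u)"
      using step1 step2 step3 by simp
    have mu_out: "\<And>u. u \<notin> U \<Longrightarrow> mu u = 0"
      unfolding mu_def by (rule sum.neutral) (force simp: U_def intro: lam0)
    have Q1le: "Q1 \<le> 0" unfolding Q1_def
      by (rule csnd_on(1)[OF c1 fU UV mu_out smu])
    have Q1lt: "(\<exists>v. mu v \<noteq> 0) \<Longrightarrow> Q1 < 0" unfolding Q1_def
      by (rule csnd_on(2)[OF c1 fU UV mu_out smu])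
    have l_out: "\<And>u x. x \<notin> X \<Longrightarrow> l u x = 0"
    proof -
      fix u x assume "x \<notin> X"
      then have "(u,x) \<notin> S" "x \<noteq> r" by (force simp: X_def)+
      then show "l u x = 0" by (simp add: l_def lam0)
    qed
    have l_sum: "\<And>u. (\<Sum>x\<in>X. l u x) = 0"
      unfolding l_def using fX rX by (simp add: sum_subtractf mu_def sum.delta)
    have Q2le: "\<And>u. Q2 u \<le> 0" unfolding Q2_def
      by (rule csnd_on(1)[OF c2 fX XV l_out l_sum])
    have Q2lt: "\<And>u. (\<exists>x. l u x \<noteq> 0) \<Longrightarrow> Q2 u < 0" unfolding Q2_def
      by (rule csnd_on(2)[OF c2 fX XV l_out l_sum])
    have sQ2le: "(\<Sum>u\<in>U. Q2 u) \<le> 0" by (rule sum_nonpos) (rule Q2le)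
    have "Q1 + (\<Sum>u\<in>U. Q2 u) < 0"
    proof (cases "\<exists>u\<in>U. \<exists>x. l u x \<noteq> 0")
      case True
      then obtain u where "u \<in> U" "\<exists>x. l u x \<noteq> 0" by blast
      then have "(\<Sum>u\<in>U. Q2 u) < (\<Sum>u\<in>U. 0)"
        using Q2le Q2lt by (intro sum_strict_mono_ex1[OF fU]) auto
      then show ?thesis using Q1le by (simp add: add_nonpos_neg)
    next
      case False
      obtain p where p: "lam p \<noteq> 0" using nz by blast
      obtain u x where px: "p = (u,x)" by (cases p)
      have "u \<in> U" using p px by (force simp: U_def S_def)
      then have "l u x = 0" using False by blast
      then have "mu u \<noteq> 0" using p px by (simp add: l_def split: if_splits)
      then have "Q1 < 0" using Q1lt by blast
      then show ?thesis using sQ2le by (simp add: add_neg_nonpos)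
    qed
    then show "(\<Sum>x\<in>{v. lam v \<noteq> 0}. \<Sum>y\<in>{v. lam v \<noteq> 0}. lam x * cnj (lam y) *
            complex_of_real (real (path_dist (comb_edges E1 E2 r) x y))) < 0"
      using Q unfolding K_def S_def by simp
  qed
qed


end
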